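(* Let $L$ be a finite $\mathcal{L}$-lattice with $|L|\le n$. Then $L$ has the interpolation property iff every valid $a\le b$ with at most $n$ left variables has an interpolant, i.e. a formula $i$ whose variables are all intersection variables of $a,b$ such that $a\le i$ and $i\le b$ are valid.
   Context: A lattice-oriented signature $\mathcal{L}$ is a finite set of connectives. Each connective $c$ has an arity $n_c\in\mathbb{N}$ and a polarity $p_c:\{1,\dots,n_c\}\to\{-,+\}$. The signature contains binary connectives $\lor,\land,\to$ with $p_\lor(1)=p_\lor(2)=p_\land(1)=p_\land(2)=+$, $p_\to(1)=-$ and $p_\to(2)=+$; nullary connectives are truth constants. A finite $\mathcal{L}$-lattice is a finite set $L$ together with an $n_c$-ary operation $c^L$ on $L$ for each connective $c$, such that: - $(L,\lor^L,\land^L)$ is a lattice, with order $x\le y$ iff $x\land y=x$; its top element is denoted $1$; - $c^L$ is monotone in every argument $i$ with $p_c(i)=+$ and antitone in every argument $i$ with $p_c(i)=-$; - for all $a,b\in L$: $1\le a\to^L b$ iff $a\le b$. Formulas (words) are built from propositional variables using the connectives. A valuation assigns elements of $L$ to the variables and extends to all formulas via the operations $c^L$. For formulas $a,b$, "$a\le b$ is valid" means that the value of $a$ is $\le$ the value of $b$ under every valuation. For a valid $a\le b$, the variables occurring only in $a$ are the left variables, those occurring only in $b$ are the right variables, and those occurring in both are the intersection variables. $L$ has the interpolation property iff for all formulas $a,b$ with $a\le b$ valid there is a formula $i$ whose variables are all intersection variables of $a,b$ such that $a\le i$ and $i\le b$ are valid. If there are no intersection variables, $i$ must be a closed formula. 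*)

theory Defs
  imports Main
begin

(* Lattice-oriented signature. Polarity: pol c i = True means '+', False means '-'.
   Argument positions are 0-indexed (position i here = position i+1 in the paper). *)
record 'c signature =
  conns :: "'c set"
  arity :: "'c \<Rightarrow> nat"
  pol   :: "'c \<Rightarrow> nat \<Rightarrow> bool"
  jn    :: 'c
  mt    :: 'c
  im    :: 'c

definition lattice_signature :: "'c signature \<Rightarrow> bool" where
  "lattice_signature S \<longleftrightarrow>
     finite (conns S) \<and>
     jn S \<in> conns S \<and> mt S \<in> conns S \<and> im S \<in> conns S \<and>
     jn S \<noteq> mt S \<and> jn S \<noteq> im S \<and> mt S \<noteq> im S \<and>
     arity S (jn S) = 2 \<and> arity S (mt S) = 2 \<and> arity S (im S) = 2 \<and>
     pol S (jn S) 0 \<and> pol S (jn S) 1 \<and> pol S (mt S) 0 \<and> pol S (mt S) 1 \<and>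
     \<not> pol S (im S) 0 \<and> pol S (im S) 1"

datatype 'c form = Var nat | App 'c "'c form list"

fun wf_form :: "'c signature \<Rightarrow> 'c form \<Rightarrow> bool" where
  "wf_form S (Var x) = True"
| "wf_form S (App c ts) \<longleftrightarrow> c \<in> conns S \<and> length ts = arity S c \<and> (\<forall>t\<in>set ts. wf_form S t)"

fun vars :: "'c form \<Rightarrow> nat set" where
  "vars (Var x) = {x}"
| "vars (App c ts) = \<Union> (vars ` set ts)"

fun eval :: "('c \<Rightarrow> 'a list \<Rightarrow> 'a) \<Rightarrow> (nat \<Rightarrow> 'a) \<Rightarrow> 'c form \<Rightarrow> 'a" where
  "eval ops v (Var x) = v x"
| "eval ops v (App c ts) = ops c (map (eval ops v) ts)"

definition lle :: "'c signature \<Rightarrow> ('c \<Rightarrow> 'a list \<Rightarrow> 'a) \<Rightarrow> 'a \<Rightarrow> 'a \<Rightarrow> bool" where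
  "lle S ops x y \<longleftrightarrow> ops (mt S) [x, y] = x"

definition finite_L_lattice ::
  "'c signature \<Rightarrow> 'a set \<Rightarrow> ('c \<Rightarrow> 'a list \<Rightarrow> 'a) \<Rightarrow> bool" where
  "finite_L_lattice S L ops \<longleftrightarrow>
     finite L \<and>
     (\<forall>c\<in>conns S. \<forall>xs. length xs = arity S c \<and> set xs \<subseteq> L \<longrightarrow> ops c xs \<in> L) \<and>
     (let j = (\<lambda>x y. ops (jn S) [x, y]); m = (\<lambda>x y. ops (mt S) [x, y]) in
       (\<forall>x\<in>L. \<forall>y\<in>L. j x y = j y x \<and> m x y = m y x) \<and>
       (\<forall>x\<in>L. \<forall>y\<in>L. \<forall>z\<in>L. j (j x y) z = j x (j y z) \<and> m (m x y) z = m x (m y z)) \<and>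
       (\<forall>x\<in>L. \<forall>y\<in>L. j x (m x y) = x \<and> m x (j x y) = x)) \<and>
     (\<forall>c\<in>conns S. \<forall>xs i y. length xs = arity S c \<and> set xs \<subseteq> L \<and> i < arity S c \<and> y \<in> L
        \<and> lle S ops (xs ! i) y \<longrightarrow>
        (if pol S c i then lle S ops (ops c xs) (ops c (xs[i := y]))
         else lle S ops (ops c (xs[i := y])) (ops c xs))) \<and>
     (\<exists>t\<in>L. (\<forall>x\<in>L. lle S ops x t) \<and>
        (\<forall>a\<in>L. \<forall>b\<in>L. lle S ops t (ops (im S) [a, b]) \<longleftrightarrow> lle S ops a b))"

definition valid_le ::
  "'c signature \<Rightarrow> 'a set \<Rightarrow> ('c \<Rightarrow> 'a list \<Rightarrow> 'a) \<Rightarrow> 'c form \<Rightarrow> 'c form \<Rightarrow> bool" where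
  "valid_le S L ops a b \<longleftrightarrow>
     (\<forall>v. (\<forall>x. v x \<in> L) \<longrightarrow> lle S ops (eval ops v a) (eval ops v b))"

definition left_vars :: "'c form \<Rightarrow> 'c form \<Rightarrow> nat set" where
  "left_vars a b = vars a - vars b"

definition inter_vars :: "'c form \<Rightarrow> 'c form \<Rightarrow> nat set" where
  "inter_vars a b = vars a \<inter> vars b"

definition is_interpolant ::
  "'c signature \<Rightarrow> 'a set \<Rightarrow> ('c \<Rightarrow> 'a list \<Rightarrow> 'a) \<Rightarrow> 'c form \<Rightarrow> 'c form \<Rightarrow> 'c form \<Rightarrow> bool" where
  "is_interpolant S L ops a b i \<longleftrightarrow>
     wf_form S i \<and> vars i \<subseteq> inter_vars a b \<and> valid_le S L ops a i \<and> valid_le S L ops i b"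

definition interpolation_property ::
  "'c signature \<Rightarrow> 'a set \<Rightarrow> ('c \<Rightarrow> 'a list \<Rightarrow> 'a) \<Rightarrow> bool" where
  "interpolation_property S L ops \<longleftrightarrow>
     (\<forall>a b. wf_form S a \<and> wf_form S b \<and> valid_le S L ops a b \<longrightarrow>
        (\<exists>i. is_interpolant S L ops a b i))"

end

theory Submission
  imports Defs
begin

fun ren :: "(nat \<Rightarrow> nat) \<Rightarrow> 'c form \<Rightarrow> 'c form" where
  "ren f (Var x) = Var (f x)"
| "ren f (App c ts) = App c (map (ren f) ts)"

fun joinall :: "'c \<Rightarrow> 'c form list \<Rightarrow> 'c form" where
  "joinall c [] = Var 0"
| "joinall c [t] = t"
| "joinall c (t # ts) = App c [t, joinall c ts]"

lemma eval_ren: "eval ops v (ren f t) = eval ops (v \<circ> f) t"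
  by (induction t) (simp_all add: comp_def cong: map_cong)

lemma vars_ren: "vars (ren f t) = f ` vars t"
  by (induction t) auto

lemma wf_ren: "wf_form S t \<Longrightarrow> wf_form S (ren f t)"
  by (induction t) auto

lemma finite_vars: "finite (vars t)"
  by (induction t) auto

lemma eval_cong: "(\<And>x. x \<in> vars t \<Longrightarrow> v x = w x) \<Longrightarrow> eval ops v t = eval ops w t"
proof (induction t)
  case (Var x) then show ?case by simp
next
  case (App c ts)
  then have "map (eval ops v) ts = map (eval ops w) ts" by (auto simp: map_eq_conv)
  then show ?case by (simp only: eval.simps)
qed

lemma eval_in:
  assumes "finite_L_lattice S L ops" "\<forall>x. v x \<in> L"
  shows "wf_form S t \<Longrightarrow> eval ops v t \<in> L"
proof (induction t)
  case (Var x) then show ?case using assms by simp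
next
  case (App c ts)
  then have "set (map (eval ops v) ts) \<subseteq> L" "length (map (eval ops v) ts) = arity S c" "c \<in> conns S"
    by auto
  then show ?case using assms(1) unfolding finite_L_lattice_def by auto
qed

context
  fixes S :: "'c signature" and L :: "'a set" and ops :: "'c \<Rightarrow> 'a list \<Rightarrow> 'a"
  assumes sig: "lattice_signature S" and lat: "finite_L_lattice S L ops"
begin

abbreviation "J x y \<equiv> ops (jn S) [x, y]"
abbreviation "M x y \<equiv> ops (mt S) [x, y]"

lemma J_in: "x \<in> L \<Longrightarrow> y \<in> L \<Longrightarrow> J x y \<in> L"
  using sig lat unfolding finite_L_lattice_def lattice_signature_def by auto

lemma comm: "x \<in> L \<Longrightarrow> y \<in> L \<Longrightarrow> J x y = J y x \<and> M x y = M y x"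
  using lat unfolding finite_L_lattice_def Let_def by blast

lemma assoc: "x \<in> L \<Longrightarrow> y \<in> L \<Longrightarrow> z \<in> L \<Longrightarrow> J (J x y) z = J x (J y z) \<and> M (M x y) z = M x (M y z)"
  using lat unfolding finite_L_lattice_def Let_def by blast

lemma absorb: "x \<in> L \<Longrightarrow> y \<in> L \<Longrightarrow> J x (M x y) = x \<and> M x (J x y) = x"
  using lat unfolding finite_L_lattice_def Let_def by blast

lemma M_in: "x \<in> L \<Longrightarrow> y \<in> L \<Longrightarrow> M x y \<in> L"
  using sig lat unfolding finite_L_lattice_def lattice_signature_def by auto

lemma idem: "x \<in> L \<Longrightarrow> M x x = x"
proof -
  assume x: "x \<in> L"
  have 1: "J x (M x x) = x" using absorb[OF x x] by simp
  have "M x (J x (M x x)) = x" using absorb[OF x M_in[OF x x]] by simp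
  then show ?thesis using 1 by simp
qed

lemma le_trans: "x \<in> L \<Longrightarrow> y \<in> L \<Longrightarrow> z \<in> L \<Longrightarrow> lle S ops x y \<Longrightarrow> lle S ops y z \<Longrightarrow> lle S ops x z"
  unfolding lle_def using assoc[of x y z] by simp

lemma ub1: "x \<in> L \<Longrightarrow> y \<in> L \<Longrightarrow> lle S ops x (J x y)"
  unfolding lle_def using absorb by blast

lemma ub2: "x \<in> L \<Longrightarrow> y \<in> L \<Longrightarrow> lle S ops y (J x y)"
proof -
  assume h: "x \<in> L" "y \<in> L"
  have "M y (J y x) = y" using absorb[OF h(2) h(1)] by simp
  then show ?thesis unfolding lle_def using comm[OF h] by simp
qed

lemma le_J: "x \<in> L \<Longrightarrow> z \<in> L \<Longrightarrow> lle S ops x z \<Longrightarrow> J x z = z"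
proof -
  assume h: "x \<in> L" "z \<in> L" "lle S ops x z"
  have "M z x = x" using h comm[of x z] unfolding lle_def by simp
  then have "J z x = z" using absorb[OF h(2) h(1)] by simp
  then show ?thesis using comm[OF h(1) h(2)] by simp
qed

lemma lub: "x \<in> L \<Longrightarrow> y \<in> L \<Longrightarrow> z \<in> L \<Longrightarrow> lle S ops x z \<Longrightarrow> lle S ops y z \<Longrightarrow> lle S ops (J x y) z"
proof -
  assume h: "x \<in> L" "y \<in> L" "z \<in> L" "lle S ops x z" "lle S ops y z"
  have xz: "J x z = z" and yz: "J y z = z" using h le_J by auto
  have "J (J x y) z = z" using assoc[of x y z] h xz yz by simp
  then show ?thesis unfolding lle_def using absorb[OF J_in[OF h(1) h(2)] h(3)] by simp
qed

lemma joinall_wf: "ts \<noteq> [] \<Longrightarrow> \<forall>t\<in>set ts. wf_form S t \<Longrightarrow> wf_form S (joinall (jn S) ts)"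
  by (induction "jn S" ts rule: joinall.induct) (use sig in \<open>auto simp: lattice_signature_def\<close>)

lemma joinall_vars: "vars (joinall c ts) \<subseteq> (\<Union>t\<in>set ts. vars t) \<union> (if ts = [] then {0} else {})"
  by (induction c ts rule: joinall.induct) auto

lemma joinall_vars': "ts \<noteq> [] \<Longrightarrow> vars (joinall c ts) \<subseteq> (\<Union>t\<in>set ts. vars t)"
  using joinall_vars[of c ts] by auto

lemma joinall_eval:
  assumes v: "\<forall>x. v x \<in> L"
  shows "ts \<noteq> [] \<Longrightarrow> \<forall>t\<in>set ts. wf_form S t \<Longrightarrow>
    eval ops v (joinall (jn S) ts) \<in> L \<and> (\<forall>t\<in>set ts. lle S ops (eval ops v t) (eval ops v (joinall (jn S) ts)))
    \<and> (\<forall>z\<in>L. (\<forall>t\<in>set ts. lle S ops (eval ops v t) z) \<longrightarrow> lle S ops (eval ops v (joinall (jn S) ts)) z)"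
proof (induction "jn S" ts rule: joinall.induct)
  case 1 then show ?case by simp
next
  case (2 t)
  have "eval ops v t \<in> L" using 2 eval_in[OF lat v] by auto
  then show ?case using 2 unfolding lle_def by (auto simp: idem)
next
  case (3 t u us)
  let ?r = "eval ops v (joinall (jn S) (u # us))"
  have IH: "?r \<in> L \<and> (\<forall>s\<in>set (u#us). lle S ops (eval ops v s) ?r)
    \<and> (\<forall>z\<in>L. (\<forall>s\<in>set (u#us). lle S ops (eval ops v s) z) \<longrightarrow> lle S ops ?r z)"
    using 3 by auto
  have t: "eval ops v t \<in> L" using 3 eval_in[OF lat v] by auto
  have ev: "eval ops v (joinall (jn S) (t # u # us)) = J (eval ops v t) ?r" by simp
  have A: "J (eval ops v t) ?r \<in> L" using IH t J_in by auto
  have B: "\<forall>s\<in>set (t#u#us). lle S ops (eval ops v s) (J (eval ops v t) ?r)"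
  proof
    fix s assume s: "s \<in> set (t#u#us)"
    show "lle S ops (eval ops v s) (J (eval ops v t) ?r)"
    proof (cases "s = t")
      case True then show ?thesis using ub1 t IH by simp
    next
      case False
      then have "s \<in> set (u#us)" using s by simp
      moreover have "eval ops v s \<in> L" using 3 eval_in[OF lat v] s by auto
      ultimately show ?thesis using IH ub2[OF t] le_trans A by blast
    qed
  qed
  have C: "\<forall>z\<in>L. (\<forall>s\<in>set (t#u#us). lle S ops (eval ops v s) z) \<longrightarrow> lle S ops (J (eval ops v t) ?r) z"
    using IH lub t by simp
  show ?case using A B C ev by simp
qed

end

theorem lemma1:
  fixes S :: "'c signature" and L :: "'a set" and ops :: "'c \<Rightarrow> 'a list \<Rightarrow> 'a" and n :: nat
  assumes "lattice_signature S"
    and "finite_L_lattice S L ops"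
    and "card L \<le> n"
  shows "interpolation_property S L ops \<longleftrightarrow>
    (\<forall>a b. wf_form S a \<and> wf_form S b \<and> valid_le S L ops a b \<and> card (left_vars a b) \<le> n \<longrightarrow>
       (\<exists>i. is_interpolant S L ops a b i))"
proof
  assume "interpolation_property S L ops"
  then show "\<forall>a b. wf_form S a \<and> wf_form S b \<and> valid_le S L ops a b \<and> card (left_vars a b) \<le> n \<longrightarrow>
       (\<exists>i. is_interpolant S L ops a b i)"
    unfolding interpolation_property_def by blast
next
  assume H: "\<forall>a b. wf_form S a \<and> wf_form S b \<and> valid_le S L ops a b \<and> card (left_vars a b) \<le> n \<longrightarrow>
       (\<exists>i. is_interpolant S L ops a b i)"
  note sig = assms(1) and lat = assms(2)
  show "interpolation_property S L ops"
    unfolding interpolation_property_def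
  proof (intro allI impI)
    fix a b :: "'c form"
    assume ab: "wf_form S a \<and> wf_form S b \<and> valid_le S L ops a b"
    define Lv where "Lv = vars a - vars b"
    define N where "N = Suc (Max (vars b \<union> {0}))"
    define m where "m = card L"
    define Y where "Y = {N..<N+m}"
    have finL: "finite L" using lat unfolding finite_L_lattice_def by auto
    have YB: "Y \<inter> vars b = {}"
    proof -
      have "\<forall>x\<in>vars b. x < N" unfolding N_def using finite_vars[of b]
        by (simp add: le_imp_less_Suc)
      then show ?thesis unfolding Y_def by auto
    qed
    have finLv: "finite Lv" unfolding Lv_def using finite_vars by auto
    define G where "G = {g :: nat \<Rightarrow> nat. \<forall>x. (x \<in> Lv \<longrightarrow> g x \<in> Y) \<and> (x \<notin> Lv \<longrightarrow> g x = 0)}"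
    define F where "F = (\<lambda>g x. if x \<in> Lv then g x else x) ` G"
    have finF: "finite F" unfolding F_def G_def Y_def
      by (rule finite_imageI, rule finite_set_of_finite_funs) (use finLv in auto)
    have Fprop: "\<And>f x. f \<in> F \<Longrightarrow> (x \<in> Lv \<longrightarrow> f x \<in> Y) \<and> (x \<notin> Lv \<longrightarrow> f x = x)"
      unfolding F_def G_def by auto
    have Fin: "\<And>f. (\<forall>x. (x \<in> Lv \<longrightarrow> f x \<in> Y) \<and> (x \<notin> Lv \<longrightarrow> f x = x)) \<Longrightarrow> f \<in> F"
    proof -
      fix f assume f: "\<forall>x. (x \<in> Lv \<longrightarrow> f x \<in> Y) \<and> (x \<notin> Lv \<longrightarrow> f x = x)"
      let ?g = "\<lambda>x. if x \<in> Lv then f x else 0"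
      have "?g \<in> G" using f unfolding G_def by auto
      moreover have "f = (\<lambda>x. if x \<in> Lv then ?g x else x)" using f by auto
      ultimately show "f \<in> F" unfolding F_def
        using image_eqI[of f "\<lambda>g x. if x \<in> Lv then g x else x" ?g G] by blast
    qed
    have Lne: "L \<noteq> {}" using lat unfolding finite_L_lattice_def by auto
    have mpos: "m > 0" using Lne finL m_def by (simp add: card_gt_0_iff)
    have idF: "(\<lambda>x. if x \<in> Lv then N else x) \<in> F"
      by (rule Fin) (use mpos in \<open>auto simp: Y_def\<close>)
    obtain fs where fs: "set fs = F" using finite_list[OF finF] by blast
    have fsne: "fs \<noteq> []" using fs idF by auto
    define ts where "ts = map (\<lambda>f. ren f a) fs"
    have tsne: "ts \<noteq> []" using fsne ts_def by simp
    have tswf: "\<forall>t\<in>set ts. wf_form S t" using ab wf_ren ts_def by auto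
    define a' where "a' = joinall (jn S) ts"
    have a'wf: "wf_form S a'" unfolding a'_def by (rule joinall_wf[OF sig lat tsne tswf])
    have a'vars: "vars a' \<subseteq> (\<Union>f\<in>F. f ` vars a)"
      using joinall_vars'[OF sig lat tsne, of "jn S"] unfolding a'_def ts_def
      by (auto simp: vars_ren fs)
    have leftY: "left_vars a' b \<subseteq> Y"
    proof
      fix y assume "y \<in> left_vars a' b"
      then have y: "y \<in> vars a'" "y \<notin> vars b" unfolding left_vars_def by auto
      then obtain f x where f: "f \<in> F" "x \<in> vars a" "y = f x" using a'vars by blast
      show "y \<in> Y"
      proof (cases "x \<in> Lv")
        case True then show ?thesis using Fprop[OF f(1)] f by auto
      next
        case False
        then have "x \<in> vars b" using f Lv_def by auto
        then show ?thesis using Fprop[OF f(1), of x] False f y by auto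
      qed
    qed
    have cardl: "card (left_vars a' b) \<le> n"
    proof -
      have "card (left_vars a' b) \<le> card Y" by (rule card_mono) (use leftY Y_def in auto)
      then show ?thesis using assms(3) Y_def m_def by simp
    qed
    have a'b: "valid_le S L ops a' b"
      unfolding valid_le_def
    proof (intro allI impI)
      fix w :: "nat \<Rightarrow> 'a" assume w: "\<forall>x. w x \<in> L"
      have bL: "eval ops w b \<in> L" using eval_in[OF lat w] ab by auto
      have "\<forall>t\<in>set ts. lle S ops (eval ops w t) (eval ops w b)"
      proof
        fix t assume "t \<in> set ts"
        then obtain f where f: "f \<in> F" "t = ren f a" using ts_def fs by auto
        have w': "\<forall>x. (w \<circ> f) x \<in> L" using w by simp
        have "lle S ops (eval ops (w \<circ> f) a) (eval ops (w \<circ> f) b)"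
          using ab w' unfolding valid_le_def by blast
        moreover have "eval ops (w \<circ> f) b = eval ops w b"
          by (rule eval_cong) (use Fprop[OF f(1)] Lv_def in auto)
        ultimately show "lle S ops (eval ops w t) (eval ops w b)" using f eval_ren by metis
      qed
      then show "lle S ops (eval ops w a') (eval ops w b)"
        using joinall_eval[OF sig lat w tsne tswf] bL unfolding a'_def by blast
    qed
    obtain i where i: "is_interpolant S L ops a' b i"
      using H a'wf ab a'b cardl by blast
    have ivars: "vars i \<subseteq> vars b" using i unfolding is_interpolant_def inter_vars_def by auto
    have ia: "vars i \<subseteq> inter_vars a b"
    proof
      fix y assume y: "y \<in> vars i"
      then have yb: "y \<in> vars b" using ivars by auto
      have "y \<in> vars a'" using i y unfolding is_interpolant_def inter_vars_def by auto
      then obtain f x where f: "f \<in> F" "x \<in> vars a" "y = f x" using a'vars by blast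
      have "x \<notin> Lv" using Fprop[OF f(1), of x] f yb YB by auto
      then have "y = x" using Fprop[OF f(1), of x] f by auto
      then show "y \<in> inter_vars a b" using f yb unfolding inter_vars_def by auto
    qed
    obtain h where h: "bij_betw h {0..<m} L" using ex_bij_betw_nat_finite[OF finL] m_def by blast
    have ai: "valid_le S L ops a i"
      unfolding valid_le_def
    proof (intro allI impI)
      fix v :: "nat \<Rightarrow> 'a" assume v: "\<forall>x. v x \<in> L"
      define f where "f x = (if x \<in> Lv then N + inv_into {0..<m} h (v x) else x)" for x
      define w where "w y = (if y \<in> Y then h (y - N) else v y)" for y
      have invr: "\<And>e. e \<in> L \<Longrightarrow> inv_into {0..<m} h e \<in> {0..<m} \<and> h (inv_into {0..<m} h e) = e"
        using h by (metis bij_betw_apply bij_betw_inv_into bij_betw_inv_into_right)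
      have fF: "f \<in> F"
        by (rule Fin) (use invr v in \<open>auto simp: f_def Y_def\<close>)
      have wL: "\<forall>x. w x \<in> L" using h v unfolding w_def Y_def bij_betw_def by auto
      have e1: "eval ops v a = eval ops (w \<circ> f) a"
      proof (rule eval_cong)
        fix x assume x: "x \<in> vars a"
        show "v x = (w \<circ> f) x"
        proof (cases "x \<in> Lv")
          case True then show ?thesis using invr v by (auto simp: f_def w_def Y_def)
        next
          case False
          then have "x \<in> vars b" using x Lv_def by auto
          then have "x \<notin> Y" using YB by auto
          then show ?thesis using False by (auto simp: f_def w_def)
        qed
      qed
      have e2: "eval ops v i = eval ops w i"
        by (rule eval_cong) (use ivars YB in \<open>auto simp: w_def\<close>)
      have "ren f a \<in> set ts" using fF fs ts_def by auto
      then have s1: "lle S ops (eval ops w (ren f a)) (eval ops w a')"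
        using joinall_eval[OF sig lat wL tsne tswf] unfolding a'_def by blast
      have s2: "lle S ops (eval ops w a') (eval ops w i)"
        using i wL unfolding is_interpolant_def valid_le_def by blast
      have inL: "eval ops w (ren f a) \<in> L" "eval ops w a' \<in> L" "eval ops w i \<in> L"
        using eval_in[OF lat wL] ab a'wf i wf_ren unfolding is_interpolant_def by auto
      have "lle S ops (eval ops w (ren f a)) (eval ops w i)"
        using le_trans[OF sig lat inL s1 s2] .
      then show "lle S ops (eval ops v a) (eval ops v i)" using e1 e2 eval_ren by metis
    qed
    have "valid_le S L ops i b" using i unfolding is_interpolant_def by auto
    then show "\<exists>i. is_interpolant S L ops a b i"
      using i ia ai unfolding is_interpolant_def by blast
  qed
qed

end
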